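(* Let $X_t,Y_t$ be symmetric Lévy processes in $\mathbb{R}^d$ with triplets $(0,\nu^X,0)$, $(0,\nu^Y,0)$, Lévy measures absolutely continuous with densities $\nu^X(x),\nu^Y(x)$, and transition densities $p^X(t,x),p^Y(t,x)$. Suppose $\sigma(x)=\nu^X(x)-\nu^Y(x)$ is integrable, and that for some $\delta>0$, $\zeta>0$ and constants $c_1,c_2,c_3$: (i) $|p^X(t,\cdot)*\sigma(x)|+|\sigma(x)|\le c_1$ for $|x|\ge\delta$ and $0<t\le1$; (ii) $p^X(t,x)\le c_2t^{-\zeta}$ for all $x$ and $0<t\le1$; (iii) $p^X(t,x)\le c_3$ for $|x|\ge\delta$ and $0<t\le 1$. Then there is a constant $C$ such that $p^Y(t,x)\le C$ for all $t>0$ and all $|x|\ge([\zeta]\vee1)\delta$, where $[\zeta]$ is the integer part of $\zeta$.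
   Context: $p^X(t,\cdot)*\sigma(x)=\int p^X(t,x-y)\sigma(y)\,dy$. *)

theory Defs
  imports "HOL-Analysis.Analysis"
begin

definition symmetric_levy_density :: "('a::euclidean_space \<Rightarrow> real) \<Rightarrow> bool" where
  "symmetric_levy_density \<nu> \<longleftrightarrow>
     \<nu> \<in> borel_measurable lborel \<and> (\<forall>x. 0 \<le> \<nu> x) \<and> (\<forall>x. \<nu> (- x) = \<nu> x) \<and>
     integrable lborel (\<lambda>x. min 1 ((norm x)\<^sup>2) * \<nu> x)"

text \<open>Levy-Khintchine exponent for the triplet (0, nu, 0) with nu symmetric.\<close>
definition levy_exponent :: "('a::euclidean_space \<Rightarrow> real) \<Rightarrow> 'a \<Rightarrow> real" where
  "levy_exponent \<nu> \<xi> = (\<integral>x. (1 - cos (\<xi> \<bullet> x)) * \<nu> x \<partial>lborel)"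

definition transition_density ::
    "('a::euclidean_space \<Rightarrow> real) \<Rightarrow> (real \<Rightarrow> 'a \<Rightarrow> real) \<Rightarrow> bool" where
  "transition_density \<nu> p \<longleftrightarrow>
     (\<forall>t>0. p t \<in> borel_measurable lborel \<and> (\<forall>x. 0 \<le> p t x) \<and> integrable lborel (p t) \<and>
        (\<forall>\<xi>. (\<integral>x. p t x *\<^sub>R cis (\<xi> \<bullet> x) \<partial>lborel) =
              complex_of_real (exp (- t * levy_exponent \<nu> \<xi>))))"

definition conv :: "('a::euclidean_space \<Rightarrow> real) \<Rightarrow> ('a \<Rightarrow> real) \<Rightarrow> 'a \<Rightarrow> real" where
  "conv f g x = (\<integral>y. f (x - y) * g y \<partial>lborel)"

end

theory Submission
  imports Defs
begin

lemma closed_integral_zero: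
  fixes f :: "'a::euclidean_space \<Rightarrow> real"
  assumes f: "integrable lborel f"
    and phi: "\<And>\<phi>. continuous_on UNIV \<phi> \<Longrightarrow> (\<And>x. \<bar>\<phi> x\<bar> \<le> 1) \<Longrightarrow> (\<integral>x. f x * \<phi> x \<partial>lborel) = 0"
    and C: "closed C"
  shows "(\<integral>x. f x * indicator C x \<partial>lborel) = 0"
proof (cases "C = {}")
  case True then show ?thesis by simp
next
  case False
  define s where "s = (\<lambda>(k::nat) x. f x * max 0 (1 - real k * infdist x C))"
  have fm[measurable]: "f \<in> borel_measurable lborel" using f by auto
  have cont: "continuous_on UNIV (\<lambda>x. max 0 (1 - real k * infdist x C))" for k
    by (intro continuous_intros)
  have "(\<lambda>k. integral\<^sup>L lborel (s k)) \<longlonglongrightarrow> (\<integral>x. f x * indicator C x \<partial>lborel)"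
  proof (rule integral_dominated_convergence[where w="\<lambda>x. norm (f x)"])
    show "(\<lambda>x. f x * indicator C x) \<in> borel_measurable lborel"
      using C by (intro borel_measurable_times fm borel_measurable_indicator) (auto intro: closed_Collect_le)
    show "s k \<in> borel_measurable lborel" for k
    proof -
      have "(\<lambda>x. max 0 (1 - real k * infdist x C)) \<in> borel_measurable borel"
        using cont[of k] by (rule borel_measurable_continuous_onI)
      then have "(\<lambda>x. max 0 (1 - real k * infdist x C)) \<in> borel_measurable lborel" by simp
      then show ?thesis unfolding s_def using fm by (intro borel_measurable_times) auto
    qed
    show "integrable lborel (\<lambda>x. norm (f x))" using f by auto
    show "AE x in lborel. (\<lambda>k. s k x) \<longlonglongrightarrow> f x * indicator C x"
    proof (intro AE_I2)
      fix x
      show "(\<lambda>k. s k x) \<longlonglongrightarrow> f x * indicator C x"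
      proof (cases "x \<in> C")
        case True
        then have "infdist x C = 0" by simp
        then show ?thesis using True by (simp add: s_def)
      next
        case nx: False
        then have pos: "infdist x C > 0" using in_closed_iff_infdist_zero[OF C False] infdist_nonneg[of x C] by auto
        obtain N :: nat where N: "1 / infdist x C < N" using reals_Archimedean2 by blast
        have "eventually (\<lambda>k. s k x = 0) sequentially"
        proof (rule eventually_sequentiallyI[of N])
          fix k assume "N \<le> k"
          then have "1 / infdist x C < real k" using N by linarith
          then have "1 < real k * infdist x C" using pos by (simp add: field_simps)
          then show "s k x = 0" by (simp add: s_def)
        qed
        then have "(\<lambda>k. s k x) \<longlonglongrightarrow> 0" by (rule tendsto_eventually)
        then show ?thesis using nx by simp
      qed
    qed
    show "AE x in lborel. norm (s k x) \<le> norm (f x)" for k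
    proof (intro AE_I2)
      fix x
      have "0 \<le> real k * infdist x C" using infdist_nonneg[of x C] by simp
      then have "\<bar>max 0 (1 - real k * infdist x C)\<bar> \<le> 1" by auto
      then show "norm (s k x) \<le> norm (f x)" unfolding s_def by (simp add: abs_mult mult_left_le)
    qed
  qed
  moreover have "integral\<^sup>L lborel (s k) = 0" for k
    unfolding s_def
  proof (rule phi[OF cont])
    fix x
    have "0 \<le> real k * infdist x C" using infdist_nonneg[of x C] by simp
    then show "\<bar>max 0 (1 - real k * infdist x C)\<bar> \<le> 1" by auto
  qed
  ultimately have "(\<lambda>k::nat. 0::real) \<longlonglongrightarrow> (\<integral>x. f x * indicator C x \<partial>lborel)" by simp
  then show ?thesis using LIMSEQ_unique[OF _ tendsto_const] by metis
qed

lemma closed_zero_AE: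
  fixes f :: "'a::euclidean_space \<Rightarrow> real"
  assumes f: "integrable lborel f"
    and C: "\<And>C. closed C \<Longrightarrow> (\<integral>x. f x * indicator C x \<partial>lborel) = 0"
  shows "AE x in lborel. f x = 0"
proof -
  have fm[measurable]: "f \<in> borel_measurable lborel" using f by auto
  define fp where "fp = (\<lambda>x. max (f x) 0)"
  define fn where "fn = (\<lambda>x. max (- f x) 0)"
  have ip: "integrable lborel fp" unfolding fp_def using f by (intro integrable_max) auto
  have in_: "integrable lborel fn" unfolding fn_def using f by (intro integrable_max) auto
  have [measurable]: "fp \<in> borel_measurable lborel" "fn \<in> borel_measurable lborel"
    unfolding fp_def fn_def by auto
  have eqC: "emeasure (density lborel (\<lambda>x. ennreal (fp x))) A = emeasure (density lborel (\<lambda>x. ennreal (fn x))) A"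
    if "A \<in> Collect closed" for A
  proof -
    have cA: "closed A" using that by simp
    then have A[measurable]: "A \<in> sets lborel" by simp
    have i1: "integrable lborel (\<lambda>x. fp x * indicator A x)"
      using integrable_mult_indicator[OF A ip] by (simp add: mult.commute)
    have i2: "integrable lborel (\<lambda>x. fn x * indicator A x)"
      using integrable_mult_indicator[OF A in_] by (simp add: mult.commute)
    have "(\<integral>x. fp x * indicator A x \<partial>lborel) - (\<integral>x. fn x * indicator A x \<partial>lborel)
        = (\<integral>x. fp x * indicator A x - fn x * indicator A x \<partial>lborel)"
      using i1 i2 by simp
    also have "\<dots> = (\<integral>x. f x * indicator A x \<partial>lborel)"
      by (intro Bochner_Integration.integral_cong) (auto simp: fp_def fn_def indicator_def)
    also have "\<dots> = 0" using C[OF cA] .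
    finally have eq: "(\<integral>x. fp x * indicator A x \<partial>lborel) = (\<integral>x. fn x * indicator A x \<partial>lborel)" by simp
    have "emeasure (density lborel (\<lambda>x. ennreal (fp x))) A = (\<integral>\<^sup>+x. ennreal (fp x * indicator A x) \<partial>lborel)"
      using cA by (subst emeasure_density) (auto intro!: nn_integral_cong simp: indicator_def)
    also have "\<dots> = ennreal (\<integral>x. fp x * indicator A x \<partial>lborel)"
      using i1 by (intro nn_integral_eq_integral) (auto simp: fp_def)
    also have "\<dots> = ennreal (\<integral>x. fn x * indicator A x \<partial>lborel)" using eq by simp
    also have "\<dots> = (\<integral>\<^sup>+x. ennreal (fn x * indicator A x) \<partial>lborel)"
      using i2 by (intro nn_integral_eq_integral[symmetric]) (auto simp: fn_def)
    also have "\<dots> = emeasure (density lborel (\<lambda>x. ennreal (fn x))) A"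
      using cA by (subst emeasure_density) (auto intro!: nn_integral_cong simp: indicator_def)
    finally show ?thesis .
  qed
  have "density lborel (\<lambda>x. ennreal (fp x)) = density lborel (\<lambda>x. ennreal (fn x))"
  proof (rule measure_eqI_generator_eq[where E="Collect closed" and \<Omega>=UNIV and A="\<lambda>_. UNIV"])
    show "Int_stable (Collect closed)" by (auto simp: Int_stable_def)
    show "Collect closed \<subseteq> Pow UNIV" by simp
    show "sets (density lborel (\<lambda>x. ennreal (fp x))) = sigma_sets UNIV (Collect closed)"
      by (simp add: borel_eq_closed)
    show "sets (density lborel (\<lambda>x. ennreal (fn x))) = sigma_sets UNIV (Collect closed)"
      by (simp add: borel_eq_closed)
    show "range (\<lambda>_. UNIV) \<subseteq> Collect closed" by simp
    show "(\<Union>i::nat. UNIV) = (UNIV::'a set)" by simp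
    have "emeasure (density lborel (\<lambda>x. ennreal (fp x))) UNIV = (\<integral>\<^sup>+x. ennreal (fp x) \<partial>lborel)"
      by (subst emeasure_density) auto
    also have "\<dots> = ennreal (\<integral>x. fp x \<partial>lborel)"
      using ip by (intro nn_integral_eq_integral) (auto simp: fp_def)
    finally show "emeasure (density lborel (\<lambda>x. ennreal (fp x))) UNIV \<noteq> \<infinity>" by simp
  qed (use eqC in auto)
  then have "AE x in lborel. ennreal (fp x) = ennreal (fn x)"
    by (intro sigma_finite_measure.density_unique[OF sigma_finite_lborel]) auto
  then show ?thesis
    by eventually_elim (auto simp: fp_def fn_def max_def split: if_splits)
qed

definition trig :: "('a::euclidean_space \<Rightarrow> complex) \<Rightarrow> bool" where
  "trig g \<longleftrightarrow> (\<exists>S c. finite S \<and> (\<forall>x. g x = (\<Sum>\<xi>\<in>S. c \<xi> * cis (\<xi> \<bullet> x))))"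

lemma trig_const: "trig (\<lambda>x. k)"
  unfolding trig_def by (rule exI[of _ "{0}"], rule exI[of _ "\<lambda>_. k"]) simp

lemma trig_cis: "trig (\<lambda>x. cis (\<xi> \<bullet> x))"
  unfolding trig_def by (rule exI[of _ "{\<xi>}"], rule exI[of _ "\<lambda>_. 1"]) simp

lemma trig_add:
  assumes "trig g" "trig h" shows "trig (\<lambda>x. g x + h x)"
proof -
  obtain S c where S: "finite S" "\<And>x. g x = (\<Sum>\<xi>\<in>S. c \<xi> * cis (\<xi> \<bullet> x))"
    using assms(1) unfolding trig_def by blast
  obtain T d where T: "finite T" "\<And>x. h x = (\<Sum>\<xi>\<in>T. d \<xi> * cis (\<xi> \<bullet> x))"
    using assms(2) unfolding trig_def by blast
  define c' where "c' = (\<lambda>\<xi>. if \<xi> \<in> S then c \<xi> else 0)"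
  define d' where "d' = (\<lambda>\<xi>. if \<xi> \<in> T then d \<xi> else 0)"
  have "g x = (\<Sum>\<xi>\<in>S \<union> T. c' \<xi> * cis (\<xi> \<bullet> x))" for x
    unfolding S(2) using S(1) T(1) by (intro sum.mono_neutral_cong_left) (auto simp: c'_def)
  moreover have "h x = (\<Sum>\<xi>\<in>S \<union> T. d' \<xi> * cis (\<xi> \<bullet> x))" for x
    unfolding T(2) using S(1) T(1) by (intro sum.mono_neutral_cong_left) (auto simp: d'_def)
  ultimately have "g x + h x = (\<Sum>\<xi>\<in>S \<union> T. (c' \<xi> + d' \<xi>) * cis (\<xi> \<bullet> x))" for x
    by (simp add: sum.distrib distrib_right)
  then show ?thesis unfolding trig_def using S(1) T(1) by (intro exI[of _ "S \<union> T"] exI[of _ "\<lambda>\<xi>. c' \<xi> + d' \<xi>"]) auto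
qed

lemma trig_mult:
  assumes "trig g" "trig h" shows "trig (\<lambda>x. g x * h x)"
proof -
  obtain S c where S: "finite S" "\<And>x. g x = (\<Sum>\<xi>\<in>S. c \<xi> * cis (\<xi> \<bullet> x))"
    using assms(1) unfolding trig_def by blast
  obtain T d where T: "finite T" "\<And>x. h x = (\<Sum>\<xi>\<in>T. d \<xi> * cis (\<xi> \<bullet> x))"
    using assms(2) unfolding trig_def by blast
  define s where "s = (\<lambda>p::'a\<times>'a. fst p + snd p)"
  define U where "U = s ` (S \<times> T)"
  define e where "e = (\<lambda>\<zeta>. \<Sum>p\<in>{p \<in> S \<times> T. s p = \<zeta>}. c (fst p) * d (snd p))"
  have fin: "finite (S \<times> T)" "finite U" using S(1) T(1) by (auto simp: U_def)
  have "g x * h x = (\<Sum>\<zeta>\<in>U. e \<zeta> * cis (\<zeta> \<bullet> x))" for x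
  proof -
    have "g x * h x = (\<Sum>p\<in>S \<times> T. c (fst p) * d (snd p) * cis (s p \<bullet> x))"
      unfolding S(2) T(2) sum_product sum.cartesian_product
      by (intro sum.cong) (auto simp: s_def inner_add_left cis_mult[symmetric] algebra_simps)
    also have "\<dots> = (\<Sum>\<zeta>\<in>U. \<Sum>p\<in>{p \<in> S \<times> T. s p = \<zeta>}. c (fst p) * d (snd p) * cis (s p \<bullet> x))"
      by (rule sum.group[symmetric]) (use fin in \<open>auto simp: U_def\<close>)
    also have "\<dots> = (\<Sum>\<zeta>\<in>U. e \<zeta> * cis (\<zeta> \<bullet> x))"
      unfolding e_def sum_distrib_right by (intro sum.cong refl) auto
    finally show ?thesis .
  qed
  then show ?thesis unfolding trig_def using fin by blast
qed

lemma trig_sum: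
  assumes "finite I" "\<And>i. i \<in> I \<Longrightarrow> trig (g i)" shows "trig (\<lambda>x. \<Sum>i\<in>I. g i x)"
  using assms by (induction I rule: finite_induct) (auto intro: trig_add trig_const)

lemma trig_sin: "trig (\<lambda>x. complex_of_real (sin (\<xi> \<bullet> x)))"
proof -
  have "complex_of_real (sin (\<xi> \<bullet> x)) = (-\<i>/2) * cis (\<xi> \<bullet> x) + (\<i>/2) * cis ((-\<xi>) \<bullet> x)" for x
    by (simp add: complex_eq_iff cis.code)
  then show ?thesis
    using trig_add[OF trig_mult[OF trig_const trig_cis] trig_mult[OF trig_const trig_cis], of "-\<i>/2" \<xi> "\<i>/2" "-\<xi>"]
    by simp
qed

definition sinvec :: "real \<Rightarrow> 'a::euclidean_space \<Rightarrow> 'a" where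
  "sinvec a x = (\<Sum>i\<in>Basis. sin (a * (x \<bullet> i)) *\<^sub>R i)"

lemma trig_poly_sinvec:
  fixes Q :: "'a::euclidean_space \<Rightarrow> real"
  assumes "real_polynomial_function Q"
  shows "trig (\<lambda>x. complex_of_real (Q (sinvec a x)))"
  using assms
proof induction
  case (linear f)
  then interpret bounded_linear f .
  have "f (sinvec a x) = (\<Sum>i\<in>Basis. sin ((a *\<^sub>R i) \<bullet> x) * f i)" for x
    unfolding sinvec_def by (simp add: sum scale inner_commute)
  then have eq: "complex_of_real (f (sinvec a x)) = (\<Sum>i\<in>Basis. complex_of_real (f i) * complex_of_real (sin ((a *\<^sub>R i) \<bullet> x)))" for x
    by (simp add: mult.commute)
  show ?case unfolding eq
    by (intro trig_sum trig_mult trig_const trig_sin) auto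
next
  case (const c) then show ?case by (rule trig_const)
next
  case (add f g) then show ?case by (simp add: trig_add)
next
  case (mult f g) then show ?case by (simp add: trig_mult)
qed

lemma trig_integral_zero:
  fixes f :: "'a::euclidean_space \<Rightarrow> real"
  assumes f: "integrable lborel f"
    and F: "\<And>\<xi>. (\<integral>x. f x *\<^sub>R cis (\<xi> \<bullet> x) \<partial>lborel) = 0"
    and g: "trig g"
  shows "(\<integral>x. f x *\<^sub>R g x \<partial>lborel) = 0"
proof -
  obtain S c where S: "finite S" "\<And>x. g x = (\<Sum>\<xi>\<in>S. c \<xi> * cis (\<xi> \<bullet> x))"
    using g unfolding trig_def by blast
  have fm[measurable]: "f \<in> borel_measurable lborel" using f by auto
  have int: "integrable lborel (\<lambda>x. f x *\<^sub>R cis (\<xi> \<bullet> x))" for \<xi>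
  proof (rule Bochner_Integration.integrable_bound[OF f])
    have "(\<lambda>x. cis (\<xi> \<bullet> x)) \<in> borel_measurable borel"
      by (intro borel_measurable_continuous_onI continuous_intros)
    then show "(\<lambda>x. f x *\<^sub>R cis (\<xi> \<bullet> x)) \<in> borel_measurable lborel" by measurable
    show "AE x in lborel. norm (f x *\<^sub>R cis (\<xi> \<bullet> x)) \<le> norm (f x)" by simp
  qed
  have "(\<integral>x. f x *\<^sub>R g x \<partial>lborel) = (\<integral>x. (\<Sum>\<xi>\<in>S. c \<xi> * (f x *\<^sub>R cis (\<xi> \<bullet> x))) \<partial>lborel)"
    unfolding S(2) by (simp add: scaleR_sum_right)
  also have "\<dots> = (\<Sum>\<xi>\<in>S. (\<integral>x. c \<xi> * (f x *\<^sub>R cis (\<xi> \<bullet> x)) \<partial>lborel))"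
    by (rule Bochner_Integration.integral_sum) (use integrable_mult_right[OF int] in simp)
  also have "\<dots> = (\<Sum>\<xi>\<in>S. c \<xi> * (\<integral>x. f x *\<^sub>R cis (\<xi> \<bullet> x) \<partial>lborel))"
    by (intro sum.cong refl integral_mult_right_zero)
  also have "\<dots> = 0" by (simp add: F)
  finally show ?thesis .
qed

lemma sinvec_inner: "i \<in> Basis \<Longrightarrow> sinvec a x \<bullet> i = sin (a * (x \<bullet> i))"
  unfolding sinvec_def by (simp add: inner_sum_left inner_Basis if_distrib cong: if_cong)

lemma sinvec_box: "sinvec a x \<in> cbox (- One) One"
  by (auto simp: mem_box sinvec_inner)

lemma fourier_unique:
  fixes f :: "'a::euclidean_space \<Rightarrow> real"
  assumes f: "integrable lborel f"
    and F: "\<And>\<xi>. (\<integral>x. f x *\<^sub>R cis (\<xi> \<bullet> x) \<partial>lborel) = 0"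
  shows "AE x in lborel. f x = 0"
proof (rule closed_zero_AE[OF f])
  fix C :: "'a set" assume "closed C"
  show "(\<integral>x. f x * indicator C x \<partial>lborel) = 0"
  proof (rule closed_integral_zero[OF f _ \<open>closed C\<close>])
    fix \<phi> :: "'a \<Rightarrow> real"
    assume phic: "continuous_on UNIV \<phi>" and phib: "\<And>x. \<bar>\<phi> x\<bar> \<le> 1"
    have fm[measurable]: "f \<in> borel_measurable lborel" using f by auto
    define a where "a = (\<lambda>n::nat. pi / (2 * real (Suc n)))"
    have apos: "a n > 0" for n by (simp add: a_def)
    define \<Phi> where "\<Phi> = (\<lambda>n u. \<phi> (\<Sum>i\<in>Basis. (arcsin (u \<bullet> i) / a n) *\<^sub>R i))"
    have \<Phi>c: "continuous_on (cbox (- One) One) (\<Phi> n)" for n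
    proof -
      have "continuous_on (cbox (- One) One) (\<lambda>u::'a. \<Sum>i\<in>Basis. (arcsin (u \<bullet> i) / a n) *\<^sub>R i)"
        using apos[of n] by (intro continuous_intros) (auto simp: mem_box)
      then show ?thesis unfolding \<Phi>_def
        by (rule continuous_on_compose2[OF phic]) auto
    qed
    have "\<forall>n. \<exists>Q. polynomial_function Q \<and> (\<forall>u\<in>cbox (- One) One. norm (\<Phi> n u - Q u) < 1 / real (Suc n))"
      by (intro allI Stone_Weierstrass_polynomial_function[OF compact_cbox \<Phi>c]) auto
    then obtain Q where Qp: "\<And>n. polynomial_function (Q n)"
      and Qa: "\<And>n u. u \<in> cbox (- One) One \<Longrightarrow> \<bar>\<Phi> n u - Q n u\<bar> < 1 / real (Suc n)"
      by (metis real_norm_def)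
    define P where "P = (\<lambda>n x. Q n (sinvec (a n) x))"
    have Pc: "continuous_on UNIV (P n)" for n
    proof -
      have "continuous_on UNIV (sinvec (a n) :: 'a \<Rightarrow> 'a)"
        unfolding sinvec_def by (intro continuous_intros)
      then show ?thesis unfolding P_def
        by (rule continuous_on_compose2[OF continuous_on_polymonial_function[OF Qp]]) auto
    qed
    have Pm[measurable]: "P n \<in> borel_measurable lborel" for n
      using borel_measurable_continuous_onI[OF Pc[of n]] by simp
    have Pclose: "\<bar>\<Phi> n (sinvec (a n) x) - P n x\<bar> < 1 / real (Suc n)" for n x
      unfolding P_def by (rule Qa[OF sinvec_box])
    have \<Phi>b: "\<bar>\<Phi> n u\<bar> \<le> 1" for n u unfolding \<Phi>_def by (rule phib)
    have Pb: "\<bar>P n x\<bar> \<le> 2" for n x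
    proof -
      have "1 / real (Suc n) \<le> 1" by simp
      then show ?thesis using Pclose[of n x] \<Phi>b[of n "sinvec (a n) x"] by linarith
    qed
    have Peq: "\<Phi> n (sinvec (a n) x) = \<phi> x" if "norm x \<le> real (Suc n)" for n x
    proof -
      have "arcsin (sin (a n * (x \<bullet> i))) / a n = x \<bullet> i" if i: "i \<in> Basis" for i
      proof -
        have "\<bar>x \<bullet> i\<bar> \<le> real (Suc n)" using Basis_le_norm[OF i, of x] \<open>norm x \<le> _\<close> by linarith
        then have "a n * \<bar>x \<bullet> i\<bar> \<le> a n * real (Suc n)"
          using apos[of n] by (intro mult_left_mono) auto
        also have "a n * real (Suc n) = pi / 2" by (simp add: a_def field_simps)
        finally have "\<bar>a n * (x \<bullet> i)\<bar> \<le> pi / 2"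
          using apos[of n] by (simp add: abs_mult)
        then have "arcsin (sin (a n * (x \<bullet> i))) = a n * (x \<bullet> i)"
          by (intro arcsin_sin) auto
        then show ?thesis using apos[of n] by simp
      qed
      then have "(\<Sum>i\<in>Basis. (arcsin (sinvec (a n) x \<bullet> i) / a n) *\<^sub>R i) = (\<Sum>i\<in>Basis. (x \<bullet> i) *\<^sub>R i)"
        by (intro sum.cong) (auto simp: sinvec_inner)
      then show ?thesis unfolding \<Phi>_def by (simp add: euclidean_representation)
    qed
    have zero: "(\<integral>x. f x * P n x \<partial>lborel) = 0" for n
    proof -
      have tr: "trig (\<lambda>x. complex_of_real (P n x))"
        unfolding P_def by (rule trig_poly_sinvec) (simp add: real_polynomial_function_eq Qp)
      have "complex_of_real (\<integral>x. f x * P n x \<partial>lborel) = (\<integral>x. f x *\<^sub>R complex_of_real (P n x) \<partial>lborel)"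
        by (simp add: scaleR_conv_of_real flip: of_real_mult)
      also have "\<dots> = 0" by (rule trig_integral_zero[OF f F tr])
      finally show ?thesis by simp
    qed
    have "(\<lambda>n. \<integral>x. f x * P n x \<partial>lborel) \<longlonglongrightarrow> (\<integral>x. f x * \<phi> x \<partial>lborel)"
    proof (rule integral_dominated_convergence[where w="\<lambda>x. 2 * norm (f x)"])
      have "\<phi> \<in> borel_measurable borel" by (rule borel_measurable_continuous_onI[OF phic])
      then have "\<phi> \<in> borel_measurable lborel" by simp
      then show "(\<lambda>x. f x * \<phi> x) \<in> borel_measurable lborel" by measurable
      show "(\<lambda>x. f x * P n x) \<in> borel_measurable lborel" for n by measurable
      show "integrable lborel (\<lambda>x. 2 * norm (f x))" using f by auto
      show "AE x in lborel. norm (f x * P n x) \<le> 2 * norm (f x)" for n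
      proof (intro AE_I2)
        fix x
        have "\<bar>f x\<bar> * \<bar>P n x\<bar> \<le> \<bar>f x\<bar> * 2" using Pb[of n x] by (intro mult_left_mono) auto
        then show "norm (f x * P n x) \<le> 2 * norm (f x)" by (simp add: abs_mult)
      qed
      show "AE x in lborel. (\<lambda>n. f x * P n x) \<longlonglongrightarrow> f x * \<phi> x"
      proof (intro AE_I2 tendsto_mult tendsto_const)
        fix x :: 'a
        obtain N :: nat where N: "norm x \<le> real N" using real_arch_simple by blast
        have ev: "eventually (\<lambda>n. \<Phi> n (sinvec (a n) x) = \<phi> x) sequentially"
          by (rule eventually_sequentiallyI[of N]) (use N in \<open>auto intro!: Peq\<close>)
        have "(\<lambda>n. \<Phi> n (sinvec (a n) x) - P n x) \<longlonglongrightarrow> 0"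
        proof (rule Lim_null_comparison[OF _ LIMSEQ_inverse_real_of_nat])
          show "\<forall>\<^sub>F n in sequentially. norm (\<Phi> n (sinvec (a n) x) - P n x) \<le> inverse (real (Suc n))"
            using Pclose[of _ x] by (intro always_eventually allI) (simp add: less_imp_le divide_inverse)
        qed
        moreover have "(\<lambda>n. \<Phi> n (sinvec (a n) x)) \<longlonglongrightarrow> \<phi> x"
          using ev by (rule tendsto_eventually)
        ultimately have "(\<lambda>n. \<Phi> n (sinvec (a n) x) - (\<Phi> n (sinvec (a n) x) - P n x)) \<longlonglongrightarrow> \<phi> x - 0"
          by (intro tendsto_diff)
        then show "(\<lambda>n. P n x) \<longlonglongrightarrow> \<phi> x" by simp
      qed
    qed
    then have "(\<lambda>n::nat. 0::real) \<longlonglongrightarrow> (\<integral>x. f x * \<phi> x \<partial>lborel)" using zero by simp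
    then show "(\<integral>x. f x * \<phi> x \<partial>lborel) = 0" using LIMSEQ_unique[OF _ tendsto_const] by metis
  qed
qed

lemma lborel_translate:
  fixes h :: "'a::euclidean_space \<Rightarrow> 'b::{banach, second_countable_topology}"
  assumes h: "integrable lborel h"
  shows "integrable lborel (\<lambda>x. h (x + c))" "(\<integral>x. h (x + c) \<partial>lborel) = integral\<^sup>L lborel h"
proof -
  have hm: "h \<in> borel_measurable borel" using h by auto
  have T: "(+) c \<in> measurable lborel borel" by simp
  have "integrable (distr lborel borel ((+) c)) h" using h by (simp add: lborel_distr_plus)
  then have "integrable lborel (\<lambda>x. h (c + x))" using integrable_distr_eq[OF T hm] by simp
  then show "integrable lborel (\<lambda>x. h (x + c))" by (simp add: add.commute)
  have "integral\<^sup>L lborel h = integral\<^sup>L (distr lborel borel ((+) c)) h" by (simp add: lborel_distr_plus)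
  also have "\<dots> = (\<integral>x. h (c + x) \<partial>lborel)" by (rule integral_distr[OF T hm])
  finally show "(\<integral>x. h (x + c) \<partial>lborel) = integral\<^sup>L lborel h" by (simp add: add.commute)
qed

lemma lborel_translate_minus:
  fixes h :: "'a::euclidean_space \<Rightarrow> 'b::{banach, second_countable_topology}"
  assumes h: "integrable lborel h"
  shows "integrable lborel (\<lambda>x. h (x - c))" "(\<integral>x. h (x - c) \<partial>lborel) = integral\<^sup>L lborel h"
  using lborel_translate[OF h, of "-c"] by simp_all

lemma conv_facts:
  fixes f g :: "'a::euclidean_space \<Rightarrow> real"
  assumes f: "integrable lborel f" and g: "integrable lborel g"
  shows conv_prod_integrable: "integrable (lborel \<Otimes>\<^sub>M lborel) (\<lambda>(y,x). f (x - y) * g y)"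
    and conv_integrable: "integrable lborel (conv f g)"
    and conv_fourier: "(\<integral>x. conv f g x *\<^sub>R cis (\<xi> \<bullet> x) \<partial>lborel)
          = (\<integral>x. f x *\<^sub>R cis (\<xi> \<bullet> x) \<partial>lborel) * (\<integral>x. g x *\<^sub>R cis (\<xi> \<bullet> x) \<partial>lborel)"
    and conv_L1: "(\<integral>x. \<bar>conv f g x\<bar> \<partial>lborel) \<le> (\<integral>x. \<bar>f x\<bar> \<partial>lborel) * (\<integral>x. \<bar>g x\<bar> \<partial>lborel)"
proof -
  have fb[measurable]: "f \<in> borel_measurable borel" using f by auto
  have gb[measurable]: "g \<in> borel_measurable borel" using g by auto
  have cism[measurable]: "(\<lambda>x::'a. cis (\<xi> \<bullet> x)) \<in> borel_measurable borel"
    by (intro borel_measurable_continuous_onI continuous_intros)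
  have m1[measurable]: "(\<lambda>(y,x). f (x - y) * g y) \<in> borel_measurable (lborel \<Otimes>\<^sub>M (lborel::'a measure))"
    by measurable
  have tr: "integrable lborel (\<lambda>x. f (x - y))" "(\<integral>x. \<bar>f (x - y)\<bar> \<partial>lborel) = (\<integral>x. \<bar>f x\<bar> \<partial>lborel)" for y
    using lborel_translate_minus[OF f] lborel_translate_minus[OF integrable_abs[OF f]] by auto
  show P: "integrable (lborel \<Otimes>\<^sub>M lborel) (\<lambda>(y,x). f (x - y) * g y)"
  proof (rule lborel_pair.Fubini_integrable)
    show "integrable lborel (\<lambda>y. \<integral>x. norm (case (y, x) of (y, x) \<Rightarrow> f (x - y) * g y) \<partial>lborel)"
    proof -
      have "(\<integral>x. norm (f (x - y) * g y) \<partial>lborel) = \<bar>g y\<bar> * (\<integral>x. \<bar>f x\<bar> \<partial>lborel)" for y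
        using tr[of y] by (simp add: abs_mult)
      then show ?thesis using g by simp
    qed
    show "AE y in lborel. integrable lborel (\<lambda>x. case (y, x) of (y, x) \<Rightarrow> f (x - y) * g y)"
      using tr by simp
  qed simp
  show I: "integrable lborel (conv f g)"
    using lborel_pair.integrable_snd[OF P] unfolding conv_def by simp
  have fhat: "(\<integral>x. f (x - y) *\<^sub>R cis (\<xi> \<bullet> x) \<partial>lborel) = cis (\<xi> \<bullet> y) * (\<integral>x. f x *\<^sub>R cis (\<xi> \<bullet> x) \<partial>lborel)" for y
  proof -
    have hi: "integrable lborel (\<lambda>x. f x *\<^sub>R cis (\<xi> \<bullet> (x + y)))"
      by (rule Bochner_Integration.integrable_bound[OF f]) auto
    have "(\<integral>x. f (x - y) *\<^sub>R cis (\<xi> \<bullet> x) \<partial>lborel) = (\<integral>x. f x *\<^sub>R cis (\<xi> \<bullet> (x + y)) \<partial>lborel)"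
      using lborel_translate_minus(2)[OF hi, of y] by simp
    also have "\<dots> = (\<integral>x. cis (\<xi> \<bullet> y) * (f x *\<^sub>R cis (\<xi> \<bullet> x)) \<partial>lborel)"
      by (intro Bochner_Integration.integral_cong) (auto simp: inner_add_right cis_mult[symmetric] algebra_simps)
    also have "\<dots> = cis (\<xi> \<bullet> y) * (\<integral>x. f x *\<^sub>R cis (\<xi> \<bullet> x) \<partial>lborel)"
      by (rule integral_mult_right_zero)
    finally show ?thesis .
  qed
  have P': "integrable (lborel \<Otimes>\<^sub>M lborel) (\<lambda>(y,x). (f (x - y) * g y) *\<^sub>R cis (\<xi> \<bullet> x))"
    by (rule Bochner_Integration.integrable_bound[OF P]) (auto simp: split_beta')
  have "(\<integral>x. conv f g x *\<^sub>R cis (\<xi> \<bullet> x) \<partial>lborel) = (\<integral>x. \<integral>y. (f (x - y) * g y) *\<^sub>R cis (\<xi> \<bullet> x) \<partial>lborel \<partial>lborel)"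
  proof (rule integral_cong_AE)
    show "AE x in lborel. conv f g x *\<^sub>R cis (\<xi> \<bullet> x) = (\<integral>y. (f (x - y) * g y) *\<^sub>R cis (\<xi> \<bullet> x) \<partial>lborel)"
      using lborel_pair.AE_integrable_snd[OF P] by eventually_elim (simp add: conv_def)
    have "(\<lambda>x. (\<integral>y. (f (x - y) * g y) *\<^sub>R cis (\<xi> \<bullet> x) \<partial>lborel)) \<in> borel_measurable lborel"
      using lborel_pair.integrable_snd[OF P'] by auto
    then show "(\<lambda>x. (\<integral>y. (f (x - y) * g y) *\<^sub>R cis (\<xi> \<bullet> x) \<partial>lborel)) \<in> borel_measurable lborel" .
    show "(\<lambda>x. conv f g x *\<^sub>R cis (\<xi> \<bullet> x)) \<in> borel_measurable lborel"
      using I by measurable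
  qed
  also have "\<dots> = (\<integral>y. \<integral>x. (f (x - y) * g y) *\<^sub>R cis (\<xi> \<bullet> x) \<partial>lborel \<partial>lborel)"
    by (rule lborel_pair.Fubini_integral[OF P'])
  also have "\<dots> = (\<integral>y. (g y *\<^sub>R cis (\<xi> \<bullet> y)) * (\<integral>x. f x *\<^sub>R cis (\<xi> \<bullet> x) \<partial>lborel) \<partial>lborel)"
  proof (intro Bochner_Integration.integral_cong refl)
    fix y
    have "(\<integral>x. (f (x - y) * g y) *\<^sub>R cis (\<xi> \<bullet> x) \<partial>lborel) = (\<integral>x. g y *\<^sub>R (f (x - y) *\<^sub>R cis (\<xi> \<bullet> x)) \<partial>lborel)"
      by (simp add: mult.commute)
    also have "\<dots> = g y *\<^sub>R (cis (\<xi> \<bullet> y) * (\<integral>x. f x *\<^sub>R cis (\<xi> \<bullet> x) \<partial>lborel))"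
      by (simp only: integral_scaleR_right fhat)
    finally show "(\<integral>x. (f (x - y) * g y) *\<^sub>R cis (\<xi> \<bullet> x) \<partial>lborel) = (g y *\<^sub>R cis (\<xi> \<bullet> y)) * (\<integral>x. f x *\<^sub>R cis (\<xi> \<bullet> x) \<partial>lborel)"
      by simp
  qed
  also have "\<dots> = (\<integral>y. g y *\<^sub>R cis (\<xi> \<bullet> y) \<partial>lborel) * (\<integral>x. f x *\<^sub>R cis (\<xi> \<bullet> x) \<partial>lborel)"
    by (rule integral_mult_left_zero)
  also have "\<dots> = (\<integral>x. f x *\<^sub>R cis (\<xi> \<bullet> x) \<partial>lborel) * (\<integral>x. g x *\<^sub>R cis (\<xi> \<bullet> x) \<partial>lborel)"
    by (simp only: mult.commute)
  finally show "(\<integral>x. conv f g x *\<^sub>R cis (\<xi> \<bullet> x) \<partial>lborel)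
          = (\<integral>x. f x *\<^sub>R cis (\<xi> \<bullet> x) \<partial>lborel) * (\<integral>x. g x *\<^sub>R cis (\<xi> \<bullet> x) \<partial>lborel)" .
  have PA: "integrable (lborel \<Otimes>\<^sub>M lborel) (\<lambda>(y,x). \<bar>f (x - y) * g y\<bar>)"
    using integrable_abs[OF P] by (simp add: split_beta')
  have "(\<integral>x. \<bar>conv f g x\<bar> \<partial>lborel) \<le> (\<integral>x. \<integral>y. \<bar>f (x - y) * g y\<bar> \<partial>lborel \<partial>lborel)"
  proof (rule integral_mono)
    show "integrable lborel (\<lambda>x. \<bar>conv f g x\<bar>)" using I by auto
    show "integrable lborel (\<lambda>x. \<integral>y. \<bar>f (x - y) * g y\<bar> \<partial>lborel)"
      using lborel_pair.integrable_snd[OF PA] by simp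
    show "\<bar>conv f g x\<bar> \<le> (\<integral>y. \<bar>f (x - y) * g y\<bar> \<partial>lborel)" for x
      unfolding conv_def using integral_abs_bound by blast
  qed
  also have "\<dots> = (\<integral>y. \<integral>x. \<bar>f (x - y) * g y\<bar> \<partial>lborel \<partial>lborel)"
    by (rule lborel_pair.Fubini_integral[OF PA])
  also have "\<dots> = (\<integral>y. \<bar>g y\<bar> * (\<integral>x. \<bar>f x\<bar> \<partial>lborel) \<partial>lborel)"
    using tr by (simp add: abs_mult)
  also have "\<dots> = (\<integral>x. \<bar>f x\<bar> \<partial>lborel) * (\<integral>x. \<bar>g x\<bar> \<partial>lborel)"
    by (simp add: mult.commute)
  finally show "(\<integral>x. \<bar>conv f g x\<bar> \<partial>lborel) \<le> (\<integral>x. \<bar>f x\<bar> \<partial>lborel) * (\<integral>x. \<bar>g x\<bar> \<partial>lborel)" .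
qed

primrec iconv :: "('a::euclidean_space \<Rightarrow> real) \<Rightarrow> ('a \<Rightarrow> real) \<Rightarrow> nat \<Rightarrow> 'a \<Rightarrow> real" where
  "iconv p q 0 = p"
| "iconv p q (Suc n) = conv (iconv p q n) q"

lemma iconv_integrable:
  fixes p q :: "'a::euclidean_space \<Rightarrow> real"
  assumes p: "integrable lborel p" and q: "integrable lborel q"
  shows "integrable lborel (iconv p q n) \<and>
         (\<integral>x. \<bar>iconv p q n x\<bar> \<partial>lborel) \<le> (\<integral>x. \<bar>p x\<bar> \<partial>lborel) * (\<integral>x. \<bar>q x\<bar> \<partial>lborel) ^ n"
proof (induction n)
  case 0 then show ?case using p by simp
next
  case (Suc n)
  then have I: "integrable lborel (iconv p q n)" by simp
  have "(\<integral>x. \<bar>iconv p q (Suc n) x\<bar> \<partial>lborel) \<le> (\<integral>x. \<bar>iconv p q n x\<bar> \<partial>lborel) * (\<integral>x. \<bar>q x\<bar> \<partial>lborel)"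
    using conv_L1[OF I q] by simp
  also have "\<dots> \<le> (\<integral>x. \<bar>p x\<bar> \<partial>lborel) * (\<integral>x. \<bar>q x\<bar> \<partial>lborel) ^ n * (\<integral>x. \<bar>q x\<bar> \<partial>lborel)"
    using Suc by (intro mult_right_mono) auto
  also have "\<dots> = (\<integral>x. \<bar>p x\<bar> \<partial>lborel) * (\<integral>x. \<bar>q x\<bar> \<partial>lborel) ^ Suc n" by simp
  finally show ?case using conv_integrable[OF I q] by simp
qed

lemma iconv_bound:
  fixes p q :: "'a::euclidean_space \<Rightarrow> real"
  assumes p: "integrable lborel p" and q: "integrable lborel q" and B: "\<And>x. \<bar>p x\<bar> \<le> B"
  shows "\<bar>iconv p q n x\<bar> \<le> B * (\<integral>x. \<bar>q x\<bar> \<partial>lborel) ^ n"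
proof (induction n arbitrary: x)
  case 0 then show ?case using B by simp
next
  case (Suc n)
  let ?s = "\<integral>x. \<bar>q x\<bar> \<partial>lborel"
  have B0: "0 \<le> B" using B[of 0] by linarith
  have s0: "0 \<le> ?s" by simp
  have I: "integrable lborel (iconv p q n)" using iconv_integrable[OF p q] by simp
  have hm[measurable]: "iconv p q n \<in> borel_measurable borel" using I by auto
  have qm[measurable]: "q \<in> borel_measurable borel" using q by auto
  have int2: "integrable lborel (\<lambda>y. B * ?s ^ n * \<bar>q y\<bar>)" using q by auto
  have int1: "integrable lborel (\<lambda>y. iconv p q n (x - y) * q y)"
  proof (rule Bochner_Integration.integrable_bound[OF int2])
    show "(\<lambda>y. iconv p q n (x - y) * q y) \<in> borel_measurable lborel" by measurable
    show "AE y in lborel. norm (iconv p q n (x - y) * q y) \<le> norm (B * ?s ^ n * \<bar>q y\<bar>)"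
    proof (intro AE_I2)
      fix y
      have "\<bar>iconv p q n (x - y)\<bar> * \<bar>q y\<bar> \<le> B * ?s ^ n * \<bar>q y\<bar>"
        using Suc.IH[of "x - y"] by (intro mult_right_mono) auto
      then show "norm (iconv p q n (x - y) * q y) \<le> norm (B * ?s ^ n * \<bar>q y\<bar>)"
        using B0 s0 by (simp add: abs_mult)
    qed
  qed
  have "\<bar>iconv p q (Suc n) x\<bar> \<le> (\<integral>y. \<bar>iconv p q n (x - y) * q y\<bar> \<partial>lborel)"
    by (simp add: conv_def integral_abs_bound)
  also have "\<dots> \<le> (\<integral>y. B * ?s ^ n * \<bar>q y\<bar> \<partial>lborel)"
  proof (rule integral_mono)
    show "integrable lborel (\<lambda>y. \<bar>iconv p q n (x - y) * q y\<bar>)" using int1 by auto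
    show "integrable lborel (\<lambda>y. B * ?s ^ n * \<bar>q y\<bar>)" by (rule int2)
    show "\<bar>iconv p q n (x - y) * q y\<bar> \<le> B * ?s ^ n * \<bar>q y\<bar>" for y
      using Suc.IH[of "x - y"] by (simp add: abs_mult mult_right_mono)
  qed
  also have "\<dots> = B * ?s ^ Suc n" by simp
  finally show ?case .
qed

lemma iconv_fourier:
  fixes p q :: "'a::euclidean_space \<Rightarrow> real"
  assumes p: "integrable lborel p" and q: "integrable lborel q"
  shows "(\<integral>x. iconv p q n x *\<^sub>R cis (\<xi> \<bullet> x) \<partial>lborel)
       = (\<integral>x. p x *\<^sub>R cis (\<xi> \<bullet> x) \<partial>lborel) * (\<integral>x. q x *\<^sub>R cis (\<xi> \<bullet> x) \<partial>lborel) ^ n"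
proof (induction n)
  case 0 then show ?case by simp
next
  case (Suc n)
  have I: "integrable lborel (iconv p q n)" using iconv_integrable[OF p q] by simp
  show ?case using conv_fourier[OF I q, of \<xi>] Suc by (simp add: mult_ac)
qed

lemma summable_exp_real: "summable (\<lambda>n. K * (x::real) ^ n / fact n)"
proof -
  have "summable (\<lambda>n. x ^ n /\<^sub>R fact n)" using exp_converges[of x] by (rule sums_summable)
  then have "summable (\<lambda>n. K * (x ^ n /\<^sub>R fact n))" by (rule summable_mult)
  then show ?thesis by (simp add: divide_inverse ac_simps)
qed

lemma aux_series_term:
  fixes P Q :: complex and c t :: real
  shows "(c * (-t) ^ n / fact n) *\<^sub>R (P * Q ^ n) = complex_of_real c * P * ((- complex_of_real t * Q) ^ n /\<^sub>R fact n)"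
proof -
  have e1: "(- complex_of_real t * Q) ^ n = complex_of_real ((-t) ^ n) * Q ^ n"
    by (simp only: power_mult_distrib of_real_power of_real_minus)
  show ?thesis unfolding e1 scaleR_conv_of_real
    by (simp only: of_real_mult of_real_divide divide_inverse of_real_inverse mult_ac)
qed

lemma series_facts:
  fixes p q :: "'a::euclidean_space \<Rightarrow> real" and c t B :: real
  assumes p: "integrable lborel p" and q: "integrable lborel q" and B: "\<And>x. \<bar>p x\<bar> \<le> B"
  defines "g \<equiv> (\<lambda>x. \<Sum>n. c * (-t) ^ n / fact n * iconv p q n x)"
  shows series_summable: "\<And>x. summable (\<lambda>n. \<bar>c * (-t) ^ n / fact n * iconv p q n x\<bar>)"
    and series_integrable: "integrable lborel g"
    and series_fourier: "(\<integral>x. g x *\<^sub>R cis (\<xi> \<bullet> x) \<partial>lborel)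
        = complex_of_real c * (\<integral>x. p x *\<^sub>R cis (\<xi> \<bullet> x) \<partial>lborel)
           * exp (- complex_of_real t * (\<integral>x. q x *\<^sub>R cis (\<xi> \<bullet> x) \<partial>lborel))"
proof -
  let ?s = "\<integral>x. \<bar>q x\<bar> \<partial>lborel"
  let ?P = "\<integral>x. \<bar>p x\<bar> \<partial>lborel"
  define f where "f = (\<lambda>n x. c * (-t) ^ n / fact n * iconv p q n x)"
  have B0: "0 \<le> B" using B[of 0] by linarith
  have s0: "0 \<le> ?s" by simp
  have fI: "integrable lborel (f n)" for n
    unfolding f_def using iconv_integrable[OF p q, of n] by auto
  have fm[measurable]: "f n \<in> borel_measurable lborel" for n using fI by auto
  have fb: "\<bar>f n x\<bar> \<le> \<bar>c\<bar> * B * (\<bar>t\<bar> * ?s) ^ n / fact n" for n x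
  proof -
    have "\<bar>f n x\<bar> = \<bar>c\<bar> * \<bar>t\<bar> ^ n / fact n * \<bar>iconv p q n x\<bar>"
      by (simp add: f_def abs_mult power_abs)
    also have "\<dots> \<le> \<bar>c\<bar> * \<bar>t\<bar> ^ n / fact n * (B * ?s ^ n)"
      by (intro mult_left_mono iconv_bound[OF p q B]) auto
    finally show ?thesis by (simp add: power_mult_distrib field_simps)
  qed
  have fL: "(\<integral>x. \<bar>f n x\<bar> \<partial>lborel) \<le> \<bar>c\<bar> * ?P * (\<bar>t\<bar> * ?s) ^ n / fact n" for n
  proof -
    have "(\<integral>x. \<bar>f n x\<bar> \<partial>lborel) = \<bar>c\<bar> * \<bar>t\<bar> ^ n / fact n * (\<integral>x. \<bar>iconv p q n x\<bar> \<partial>lborel)"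
      by (simp add: f_def abs_mult power_abs)
    also have "\<dots> \<le> \<bar>c\<bar> * \<bar>t\<bar> ^ n / fact n * (?P * ?s ^ n)"
      using iconv_integrable[OF p q, of n] by (intro mult_left_mono) auto
    finally show ?thesis by (simp add: power_mult_distrib field_simps)
  qed
  have sx: "summable (\<lambda>n. \<bar>f n x\<bar>)" for x
    by (rule summable_comparison_test'[OF summable_exp_real[of "\<bar>c\<bar> * B" "\<bar>t\<bar> * ?s"]])
       (use fb in \<open>auto simp: mult.assoc\<close>)
  then show "\<And>x. summable (\<lambda>n. \<bar>c * (-t) ^ n / fact n * iconv p q n x\<bar>)" unfolding f_def .
  have sI: "summable (\<lambda>n. \<integral>x. norm (f n x) \<partial>lborel)"
    by (rule summable_comparison_test'[OF summable_exp_real[of "\<bar>c\<bar> * ?P" "\<bar>t\<bar> * ?s"]])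
       (use fL in \<open>auto simp: mult.assoc\<close>)
  have gf: "g = (\<lambda>x. \<Sum>n. f n x)" unfolding g_def f_def ..
  show gI: "integrable lborel g"
    unfolding gf using fI sx sI by (intro integrable_suminf) auto
  define F where "F = (\<lambda>n x. f n x *\<^sub>R cis (\<xi> \<bullet> x))"
  have cism[measurable]: "(\<lambda>x::'a. cis (\<xi> \<bullet> x)) \<in> borel_measurable borel"
    by (intro borel_measurable_continuous_onI continuous_intros)
  have FI: "integrable lborel (F n)" for n
    unfolding F_def by (rule Bochner_Integration.integrable_bound[OF fI[of n]]) auto
  have "(\<integral>x. g x *\<^sub>R cis (\<xi> \<bullet> x) \<partial>lborel) = (\<integral>x. (\<Sum>n. F n x) \<partial>lborel)"
  proof (intro Bochner_Integration.integral_cong refl)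
    fix x
    have "summable (\<lambda>n. norm (f n x))" using sx[of x] by (simp only: real_norm_def)
    then have "summable (\<lambda>n. f n x)" by (rule summable_norm_cancel)
    then show "g x *\<^sub>R cis (\<xi> \<bullet> x) = (\<Sum>n. F n x)"
      unfolding gf F_def by (rule suminf_scaleR_left)
  qed
  also have "\<dots> = (\<Sum>n. integral\<^sup>L lborel (F n))"
    using FI sx sI by (intro integral_suminf) (auto simp: F_def)
  also have "\<dots> = (\<Sum>n. complex_of_real c * (\<integral>x. p x *\<^sub>R cis (\<xi> \<bullet> x) \<partial>lborel) *
        ((- complex_of_real t * (\<integral>x. q x *\<^sub>R cis (\<xi> \<bullet> x) \<partial>lborel)) ^ n /\<^sub>R fact n))"
  proof (intro suminf_cong)
    fix n
    have "integral\<^sup>L lborel (F n) = (\<integral>x. (c * (-t) ^ n / fact n) *\<^sub>R (iconv p q n x *\<^sub>R cis (\<xi> \<bullet> x)) \<partial>lborel)"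
      unfolding F_def f_def by simp
    also have "\<dots> = (c * (-t) ^ n / fact n) *\<^sub>R ((\<integral>x. p x *\<^sub>R cis (\<xi> \<bullet> x) \<partial>lborel) * (\<integral>x. q x *\<^sub>R cis (\<xi> \<bullet> x) \<partial>lborel) ^ n)"
      by (simp only: integral_scaleR_right iconv_fourier[OF p q])
    also have "\<dots> = complex_of_real c * (\<integral>x. p x *\<^sub>R cis (\<xi> \<bullet> x) \<partial>lborel) *
        ((- complex_of_real t * (\<integral>x. q x *\<^sub>R cis (\<xi> \<bullet> x) \<partial>lborel)) ^ n /\<^sub>R fact n)"
      by (rule aux_series_term)
    finally show "integral\<^sup>L lborel (F n) = complex_of_real c * (\<integral>x. p x *\<^sub>R cis (\<xi> \<bullet> x) \<partial>lborel) *
        ((- complex_of_real t * (\<integral>x. q x *\<^sub>R cis (\<xi> \<bullet> x) \<partial>lborel)) ^ n /\<^sub>R fact n)" .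
  qed
  also have "\<dots> = complex_of_real c * (\<integral>x. p x *\<^sub>R cis (\<xi> \<bullet> x) \<partial>lborel)
           * exp (- complex_of_real t * (\<integral>x. q x *\<^sub>R cis (\<xi> \<bullet> x) \<partial>lborel))"
    by (rule sums_unique[symmetric], rule sums_mult, rule exp_converges)
  finally show "(\<integral>x. g x *\<^sub>R cis (\<xi> \<bullet> x) \<partial>lborel)
        = complex_of_real c * (\<integral>x. p x *\<^sub>R cis (\<xi> \<bullet> x) \<partial>lborel)
           * exp (- complex_of_real t * (\<integral>x. q x *\<^sub>R cis (\<xi> \<bullet> x) \<partial>lborel))" .
qed

lemma lborel_distr_uminus_eucl: "distr lborel borel uminus = (lborel :: 'a::euclidean_space measure)"
proof -
  have "(lborel :: 'a measure) = density (distr lborel borel (\<lambda>x. 0 + (-1::real) *\<^sub>R x)) (\<lambda>_. \<bar>-1::real\<bar> ^ DIM('a))"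
    by (rule lborel_affine) simp
  then show ?thesis by (simp add: density_1 one_ennreal_def[symmetric])
qed

lemma lborel_reflect:
  fixes h :: "'a::euclidean_space \<Rightarrow> 'b::{banach, second_countable_topology}"
  assumes h: "h \<in> borel_measurable borel"
  shows "(\<integral>x. h (- x) \<partial>lborel) = integral\<^sup>L lborel h"
proof -
  have "integral\<^sup>L lborel h = integral\<^sup>L (distr lborel borel uminus) h" by (simp add: lborel_distr_uminus_eucl)
  also have "\<dots> = (\<integral>x. h (- x) \<partial>lborel)" by (rule integral_distr) (use h in auto)
  finally show ?thesis ..
qed

lemma one_minus_cos_le: "1 - cos (u::real) \<le> u\<^sup>2 / 2"
proof -
  have "cos u = 1 - 2 * sin (u/2) ^ 2" using cos_double_sin[of "u/2"] by simp
  moreover have "sin (u/2) ^ 2 \<le> (u/2) ^ 2"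
    using abs_sin_x_le_abs_x[of "u/2"] by (metis abs_ge_zero power2_abs power_mono)
  ultimately show ?thesis by (simp add: power_divide)
qed

lemma one_minus_cos_bound:
  fixes \<xi> x :: "'a::euclidean_space"
  shows "\<bar>1 - cos (\<xi> \<bullet> x)\<bar> \<le> (2 + (norm \<xi>)\<^sup>2) * min 1 ((norm x)\<^sup>2)"
proof -
  have nn: "0 \<le> 1 - cos (\<xi> \<bullet> x)" by simp
  show ?thesis
  proof (cases "(norm x)\<^sup>2 \<le> 1")
    case True
    have "\<bar>\<xi> \<bullet> x\<bar> \<le> norm \<xi> * norm x" by (rule Cauchy_Schwarz_ineq2)
    then have "(\<xi> \<bullet> x)\<^sup>2 \<le> (norm \<xi> * norm x)\<^sup>2" by (metis abs_ge_zero power2_abs power_mono)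
    then have "1 - cos (\<xi> \<bullet> x) \<le> (norm \<xi>)\<^sup>2 * (norm x)\<^sup>2 / 2"
      using one_minus_cos_le[of "\<xi> \<bullet> x"] by (simp add: power_mult_distrib)
    also have "\<dots> \<le> (2 + (norm \<xi>)\<^sup>2) * (norm x)\<^sup>2"
      by (simp add: field_simps)
    finally show ?thesis using True nn by simp
  next
    case False
    have "1 - cos (\<xi> \<bullet> x) \<le> 2" using cos_ge_minus_one[of "\<xi> \<bullet> x"] by linarith
    moreover have "0 \<le> (norm \<xi>)\<^sup>2" by simp
    moreover have "(2 + (norm \<xi>)\<^sup>2) * min 1 ((norm x)\<^sup>2) = 2 + (norm \<xi>)\<^sup>2" using False by simp
    moreover have "\<bar>1 - cos (\<xi> \<bullet> x)\<bar> = 1 - cos (\<xi> \<bullet> x)" using nn by simp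
    ultimately show ?thesis by linarith
  qed
qed

lemma levy_integrable:
  fixes \<nu> :: "'a::euclidean_space \<Rightarrow> real"
  assumes "symmetric_levy_density \<nu>"
  shows "integrable lborel (\<lambda>x. (1 - cos (\<xi> \<bullet> x)) * \<nu> x)"
proof -
  have nm[measurable]: "\<nu> \<in> borel_measurable borel" and nn: "\<And>x. 0 \<le> \<nu> x"
    and ni: "integrable lborel (\<lambda>x. min 1 ((norm x)\<^sup>2) * \<nu> x)"
    using assms unfolding symmetric_levy_density_def by auto
  have cm[measurable]: "(\<lambda>x::'a. cos (\<xi> \<bullet> x)) \<in> borel_measurable borel"
    by (intro borel_measurable_continuous_onI continuous_intros)
  show ?thesis
  proof (rule Bochner_Integration.integrable_bound)
    show "integrable lborel (\<lambda>x. (2 + (norm \<xi>)\<^sup>2) * (min 1 ((norm x)\<^sup>2) * \<nu> x))"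
      using ni by auto
    show "(\<lambda>x. (1 - cos (\<xi> \<bullet> x)) * \<nu> x) \<in> borel_measurable lborel" by measurable
    show "AE x in lborel. norm ((1 - cos (\<xi> \<bullet> x)) * \<nu> x) \<le> norm ((2 + (norm \<xi>)\<^sup>2) * (min 1 ((norm x)\<^sup>2) * \<nu> x))"
    proof (intro AE_I2)
      fix x
      have "\<bar>1 - cos (\<xi> \<bullet> x)\<bar> * \<nu> x \<le> (2 + (norm \<xi>)\<^sup>2) * min 1 ((norm x)\<^sup>2) * \<nu> x"
        using one_minus_cos_bound[of \<xi> x] nn[of x] by (intro mult_right_mono) auto
      then show "norm ((1 - cos (\<xi> \<bullet> x)) * \<nu> x) \<le> norm ((2 + (norm \<xi>)\<^sup>2) * (min 1 ((norm x)\<^sup>2) * \<nu> x))"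
        using nn[of x] by (simp add: abs_mult mult.assoc)
    qed
  qed
qed

lemma levy_exponent_diff:
  fixes \<nu>X \<nu>Y :: "'a::euclidean_space \<Rightarrow> real"
  assumes X: "symmetric_levy_density \<nu>X" and Y: "symmetric_levy_density \<nu>Y"
    and s: "integrable lborel (\<lambda>x. \<nu>X x - \<nu>Y x)"
  shows "levy_exponent \<nu>Y \<xi> = levy_exponent \<nu>X \<xi> - (\<integral>x. \<nu>X x - \<nu>Y x \<partial>lborel)
            + (\<integral>x. (\<nu>X x - \<nu>Y x) * cos (\<xi> \<bullet> x) \<partial>lborel)"
proof -
  let ?s = "\<lambda>x. \<nu>X x - \<nu>Y x"
  have cm[measurable]: "(\<lambda>x::'a. cos (\<xi> \<bullet> x)) \<in> borel_measurable borel"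
    by (intro borel_measurable_continuous_onI continuous_intros)
  have sc: "integrable lborel (\<lambda>x. ?s x * cos (\<xi> \<bullet> x))"
    by (rule Bochner_Integration.integrable_bound[OF s]) (use s in \<open>auto simp: abs_mult intro!: mult_left_le\<close>)
  have "levy_exponent \<nu>Y \<xi> = (\<integral>x. (1 - cos (\<xi> \<bullet> x)) * \<nu>X x - (?s x - ?s x * cos (\<xi> \<bullet> x)) \<partial>lborel)"
    unfolding levy_exponent_def by (intro Bochner_Integration.integral_cong) (auto simp: algebra_simps)
  also have "\<dots> = levy_exponent \<nu>X \<xi> - (\<integral>x. ?s x - ?s x * cos (\<xi> \<bullet> x) \<partial>lborel)"
    unfolding levy_exponent_def using levy_integrable[OF X] s sc by (subst Bochner_Integration.integral_diff) auto
  also have "(\<integral>x. ?s x - ?s x * cos (\<xi> \<bullet> x) \<partial>lborel) = (\<integral>x. ?s x \<partial>lborel) - (\<integral>x. ?s x * cos (\<xi> \<bullet> x) \<partial>lborel)"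
    using s sc by (rule Bochner_Integration.integral_diff)
  finally show ?thesis by simp
qed

lemma sigma_hat_real:
  fixes \<sigma> :: "'a::euclidean_space \<Rightarrow> real"
  assumes s: "integrable lborel \<sigma>" and sym: "\<And>x. \<sigma> (- x) = \<sigma> x"
  shows "(\<integral>x. \<sigma> x *\<^sub>R cis (\<xi> \<bullet> x) \<partial>lborel) = complex_of_real (\<integral>x. \<sigma> x * cos (\<xi> \<bullet> x) \<partial>lborel)"
proof -
  have sm[measurable]: "\<sigma> \<in> borel_measurable borel" using s by auto
  have cm[measurable]: "(\<lambda>x::'a. cos (\<xi> \<bullet> x)) \<in> borel_measurable borel"
    by (intro borel_measurable_continuous_onI continuous_intros)
  have snm[measurable]: "(\<lambda>x::'a. sin (\<xi> \<bullet> x)) \<in> borel_measurable borel"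
    by (intro borel_measurable_continuous_onI continuous_intros)
  have sc: "integrable lborel (\<lambda>x. \<sigma> x * cos (\<xi> \<bullet> x))"
    by (rule Bochner_Integration.integrable_bound[OF s]) (auto simp: abs_mult intro!: mult_left_le)
  have ss: "integrable lborel (\<lambda>x. \<sigma> x * sin (\<xi> \<bullet> x))"
    by (rule Bochner_Integration.integrable_bound[OF s]) (auto simp: abs_mult intro!: mult_left_le)
  have "(\<integral>x. \<sigma> x * sin (\<xi> \<bullet> x) \<partial>lborel) = (\<integral>x. \<sigma> (- x) * sin (\<xi> \<bullet> (- x)) \<partial>lborel)"
    by (rule lborel_reflect[symmetric]) measurable
  also have "\<dots> = - (\<integral>x. \<sigma> x * sin (\<xi> \<bullet> x) \<partial>lborel)"
    by (simp add: sym)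
  finally have S0: "(\<integral>x. \<sigma> x * sin (\<xi> \<bullet> x) \<partial>lborel) = 0" by simp
  have "(\<integral>x. \<sigma> x *\<^sub>R cis (\<xi> \<bullet> x) \<partial>lborel)
      = (\<integral>x. complex_of_real (\<sigma> x * cos (\<xi> \<bullet> x)) + \<i> * complex_of_real (\<sigma> x * sin (\<xi> \<bullet> x)) \<partial>lborel)"
    by (intro Bochner_Integration.integral_cong) (auto simp: complex_eq_iff cis.code)
  also have "\<dots> = complex_of_real (\<integral>x. \<sigma> x * cos (\<xi> \<bullet> x) \<partial>lborel) + \<i> * complex_of_real (\<integral>x. \<sigma> x * sin (\<xi> \<bullet> x) \<partial>lborel)"
  proof -
    have i1: "complex_integrable lborel (\<lambda>x. complex_of_real (\<sigma> x * cos (\<xi> \<bullet> x)))"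
      using sc by (rule integrable_of_real)
    have i2: "complex_integrable lborel (\<lambda>x. \<i> * complex_of_real (\<sigma> x * sin (\<xi> \<bullet> x)))"
      using integrable_of_real[OF ss] by (rule integrable_mult_right)
    show ?thesis
      by (simp only: Bochner_Integration.integral_add[OF i1 i2] integral_mult_right_zero integral_complex_of_real)
  qed
  finally show ?thesis using S0 by simp
qed

lemma td_facts:
  fixes \<nu> :: "'a::euclidean_space \<Rightarrow> real"
  assumes "transition_density \<nu> p" "t > 0"
  shows "p t \<in> borel_measurable lborel" "\<And>x. 0 \<le> p t x" "integrable lborel (p t)"
    "\<And>\<xi>. (\<integral>x. p t x *\<^sub>R cis (\<xi> \<bullet> x) \<partial>lborel) = complex_of_real (exp (- t * levy_exponent \<nu> \<xi>))"
    "(\<integral>x. p t x \<partial>lborel) = 1"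
proof -
  show m: "p t \<in> borel_measurable lborel" and "\<And>x. 0 \<le> p t x" and i: "integrable lborel (p t)"
    and F: "\<And>\<xi>. (\<integral>x. p t x *\<^sub>R cis (\<xi> \<bullet> x) \<partial>lborel) = complex_of_real (exp (- t * levy_exponent \<nu> \<xi>))"
    using assms unfolding transition_density_def by auto
  have "complex_of_real (\<integral>x. p t x \<partial>lborel) = (\<integral>x. p t x *\<^sub>R cis (0 \<bullet> x) \<partial>lborel)"
    by (simp add: scaleR_conv_of_real)
  also have "\<dots> = 1" unfolding F by (simp add: levy_exponent_def)
  finally show "(\<integral>x. p t x \<partial>lborel) = 1" by simp
qed

lemma lborel_reflect_integrable:
  fixes h :: "'a::euclidean_space \<Rightarrow> 'b::{banach, second_countable_topology}"
  assumes h: "integrable lborel h"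
  shows "integrable lborel (\<lambda>x. h (- x))"
proof -
  have hm: "h \<in> borel_measurable borel" using h by auto
  have T: "uminus \<in> measurable lborel (borel :: 'a measure)" by simp
  have "integrable (distr lborel borel uminus) h" using h by (simp add: lborel_distr_uminus_eucl)
  then show ?thesis using integrable_distr_eq[OF T hm] by simp
qed

lemma lborel_flip:
  fixes h :: "'a::euclidean_space \<Rightarrow> 'b::{banach, second_countable_topology}"
  assumes h: "integrable lborel h"
  shows "integrable lborel (\<lambda>y. h (x - y))" "(\<integral>y. h (x - y) \<partial>lborel) = integral\<^sup>L lborel h"
proof -
  have i1: "integrable lborel (\<lambda>z. h (z + x))" using lborel_translate(1)[OF h] .
  have "integrable lborel (\<lambda>y. h (- y + x))" using lborel_reflect_integrable[OF i1] .
  then show "integrable lborel (\<lambda>y. h (x - y))" by (simp add: add.commute)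
  have m: "(\<lambda>z. h (z + x)) \<in> borel_measurable borel" using i1 by auto
  have "(\<integral>y. h (- y + x) \<partial>lborel) = (\<integral>z. h (z + x) \<partial>lborel)" using lborel_reflect[OF m] by simp
  also have "\<dots> = integral\<^sup>L lborel h" using lborel_translate(2)[OF h] .
  finally show "(\<integral>y. h (x - y) \<partial>lborel) = integral\<^sup>L lborel h" by (simp add: add.commute)
qed

lemma region_bound:
  fixes p q :: "'a::euclidean_space \<Rightarrow> real" and \<delta> c1 B :: real
  assumes p: "integrable lborel p" and q: "integrable lborel q" and B: "\<And>x. \<bar>p x\<bar> \<le> B"
    and p1: "(\<integral>x. \<bar>p x\<bar> \<partial>lborel) \<le> 1"
    and c10: "0 \<le> c1"
    and h1: "\<And>x. norm x \<ge> \<delta> \<Longrightarrow> \<bar>conv p q x\<bar> \<le> c1"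
    and qb: "\<And>y. norm y \<ge> \<delta> \<Longrightarrow> \<bar>q y\<bar> \<le> c1"
  shows "1 \<le> n \<Longrightarrow> norm x \<ge> real n * \<delta> \<Longrightarrow>
         \<bar>iconv p q n x\<bar> \<le> real n * c1 * (\<integral>x. \<bar>q x\<bar> \<partial>lborel) ^ (n - 1)"
proof (induction n arbitrary: x)
  case 0 then show ?case by simp
next
  case (Suc n)
  let ?s = "\<integral>x. \<bar>q x\<bar> \<partial>lborel"
  have s0: "0 \<le> ?s" by simp
  show ?case
  proof (cases "n = 0")
    case True
    then show ?thesis using h1[of x] Suc.prems by simp
  next
    case False
    then have n1: "1 \<le> n" by simp
    define b where "b = real n * c1 * ?s ^ (n - 1)"
    have b0: "0 \<le> b" unfolding b_def using c10 s0 by simp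
    have IH: "\<bar>iconv p q n z\<bar> \<le> b" if "norm z \<ge> real n * \<delta>" for z
      using Suc.IH[OF n1 that] by (simp add: b_def)
    have I: "integrable lborel (iconv p q n)" and IL: "(\<integral>x. \<bar>iconv p q n x\<bar> \<partial>lborel) \<le> ?s ^ n"
    proof -
      have a: "integrable lborel (iconv p q n)" "(\<integral>x. \<bar>iconv p q n x\<bar> \<partial>lborel) \<le> (\<integral>x. \<bar>p x\<bar> \<partial>lborel) * ?s ^ n"
        using iconv_integrable[OF p q, of n] by auto
      have "(\<integral>x. \<bar>p x\<bar> \<partial>lborel) * ?s ^ n \<le> 1 * ?s ^ n"
        using p1 s0 by (intro mult_right_mono) auto
      then show "integrable lborel (iconv p q n)" "(\<integral>x. \<bar>iconv p q n x\<bar> \<partial>lborel) \<le> ?s ^ n"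
        using a by auto
    qed
    have hm[measurable]: "iconv p q n \<in> borel_measurable borel" using I by auto
    have qm[measurable]: "q \<in> borel_measurable borel" using q by auto
    have B0: "0 \<le> B" using B[of 0] by linarith
    have int2: "integrable lborel (\<lambda>y. B * ?s ^ n * \<bar>q y\<bar>)" using q by auto
    have int1: "integrable lborel (\<lambda>y. iconv p q n (x - y) * q y)"
    proof (rule Bochner_Integration.integrable_bound[OF int2])
      show "(\<lambda>y. iconv p q n (x - y) * q y) \<in> borel_measurable lborel" by measurable
      show "AE y in lborel. norm (iconv p q n (x - y) * q y) \<le> norm (B * ?s ^ n * \<bar>q y\<bar>)"
      proof (intro AE_I2)
        fix y
        have "\<bar>iconv p q n (x - y)\<bar> * \<bar>q y\<bar> \<le> B * ?s ^ n * \<bar>q y\<bar>"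
          using iconv_bound[OF p q B, of n "x - y"] by (intro mult_right_mono) auto
        then show "norm (iconv p q n (x - y) * q y) \<le> norm (B * ?s ^ n * \<bar>q y\<bar>)"
          using B0 s0 by (simp add: abs_mult)
      qed
    qed
    have fl: "integrable lborel (\<lambda>y. \<bar>iconv p q n (x - y)\<bar>)"
      "(\<integral>y. \<bar>iconv p q n (x - y)\<bar> \<partial>lborel) = (\<integral>y. \<bar>iconv p q n y\<bar> \<partial>lborel)"
      using lborel_flip[OF integrable_abs[OF I], of x] by auto
    have pw: "\<bar>iconv p q n (x - y) * q y\<bar> \<le> b * \<bar>q y\<bar> + c1 * \<bar>iconv p q n (x - y)\<bar>" for y
    proof (cases "norm y \<ge> \<delta>")
      case True
      have "\<bar>iconv p q n (x - y) * q y\<bar> \<le> \<bar>iconv p q n (x - y)\<bar> * c1"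
        unfolding abs_mult by (intro mult_left_mono qb True) auto
      then show ?thesis using b0 by (simp add: mult.commute add_increasing)
    next
      case False
      have "norm (x - y) \<ge> norm x - norm y" by (rule norm_triangle_ineq2)
      then have "norm (x - y) \<ge> real n * \<delta>" using Suc.prems(2) False by (simp add: algebra_simps)
      then have "\<bar>iconv p q n (x - y) * q y\<bar> \<le> b * \<bar>q y\<bar>"
        unfolding abs_mult by (intro mult_right_mono IH) auto
      then show ?thesis using c10 by (simp add: add_increasing2)
    qed
    have "\<bar>iconv p q (Suc n) x\<bar> \<le> (\<integral>y. \<bar>iconv p q n (x - y) * q y\<bar> \<partial>lborel)"
      by (simp add: conv_def integral_abs_bound)
    also have "\<dots> \<le> (\<integral>y. b * \<bar>q y\<bar> + c1 * \<bar>iconv p q n (x - y)\<bar> \<partial>lborel)"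
      using int1 q fl(1) pw by (intro integral_mono) auto
    also have "\<dots> = b * ?s + c1 * (\<integral>y. \<bar>iconv p q n y\<bar> \<partial>lborel)"
      using q fl by (subst Bochner_Integration.integral_add) auto
    also have "\<dots> \<le> b * ?s + c1 * ?s ^ n"
      using IL c10 by (intro add_left_mono mult_left_mono) auto
    also have "\<dots> = real (Suc n) * c1 * ?s ^ (Suc n - 1)"
      using n1 unfolding b_def by (cases n) (auto simp: algebra_simps)
    finally show ?thesis .
  qed
qed

lemma fourier_integrable:
  fixes f :: "'a::euclidean_space \<Rightarrow> real"
  assumes f: "integrable lborel f"
  shows "integrable lborel (\<lambda>x. f x *\<^sub>R cis (\<xi> \<bullet> x))"
proof (rule Bochner_Integration.integrable_bound[OF f])
  have fm[measurable]: "f \<in> borel_measurable lborel" using f by auto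
  have "(\<lambda>x. cis (\<xi> \<bullet> x)) \<in> borel_measurable borel"
    by (intro borel_measurable_continuous_onI continuous_intros)
  then show "(\<lambda>x. f x *\<^sub>R cis (\<xi> \<bullet> x)) \<in> borel_measurable lborel" by measurable
  show "AE x in lborel. norm (f x *\<^sub>R cis (\<xi> \<bullet> x)) \<le> norm (f x)" by simp
qed

lemma fourier_diff_unique:
  fixes f g :: "'a::euclidean_space \<Rightarrow> real"
  assumes f: "integrable lborel f" and g: "integrable lborel g"
    and F: "\<And>\<xi>. (\<integral>x. f x *\<^sub>R cis (\<xi> \<bullet> x) \<partial>lborel) = (\<integral>x. g x *\<^sub>R cis (\<xi> \<bullet> x) \<partial>lborel)"
  shows "AE x in lborel. f x = g x"
proof -
  have "AE x in lborel. f x - g x = 0"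
  proof (rule fourier_unique)
    show "integrable lborel (\<lambda>x. f x - g x)" using f g by auto
    fix \<xi> :: 'a
    have "(\<integral>x. (f x - g x) *\<^sub>R cis (\<xi> \<bullet> x) \<partial>lborel) = (\<integral>x. f x *\<^sub>R cis (\<xi> \<bullet> x) - g x *\<^sub>R cis (\<xi> \<bullet> x) \<partial>lborel)"
      by (simp add: scaleR_left_diff_distrib)
    also have "\<dots> = 0"
      using fourier_integrable[OF f, of \<xi>] fourier_integrable[OF g, of \<xi>] F[of \<xi>]
      by (subst Bochner_Integration.integral_diff) auto
    finally show "(\<integral>x. (f x - g x) *\<^sub>R cis (\<xi> \<bullet> x) \<partial>lborel) = 0" .
  qed
  then show ?thesis by eventually_elim simp
qed

lemma series_ae_eq:
  fixes \<nu>X \<nu>Y :: "'a::euclidean_space \<Rightarrow> real" and pX pY :: "real \<Rightarrow> 'a \<Rightarrow> real"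
  assumes levX: "symmetric_levy_density \<nu>X"
    and levY: "symmetric_levy_density \<nu>Y"
    and pX: "transition_density \<nu>X pX"
    and pY: "transition_density \<nu>Y pY"
    and sigma_int: "integrable lborel (\<lambda>x. \<nu>X x - \<nu>Y x)"
    and t: "t > 0" and B: "\<And>x. \<bar>pX t x\<bar> \<le> B"
  shows "AE x in lborel. pY t x = (\<Sum>n. exp (t * (\<integral>x. \<nu>X x - \<nu>Y x \<partial>lborel)) * (-t) ^ n / fact n
                                       * iconv (pX t) (\<lambda>x. \<nu>X x - \<nu>Y x) n x)"
proof (rule fourier_diff_unique)
  define \<sigma> where "\<sigma> = (\<lambda>x. \<nu>X x - \<nu>Y x)"
  define m where "m = (\<integral>x. \<nu>X x - \<nu>Y x \<partial>lborel)"
  have s: "integrable lborel \<sigma>" using sigma_int by (simp add: \<sigma>_def)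
  have sym: "\<sigma> (- x) = \<sigma> x" for x
    using levX levY unfolding \<sigma>_def symmetric_levy_density_def by auto
  have pXi: "integrable lborel (pX t)" using td_facts[OF pX t] by auto
  note sf = series_facts[OF pXi s B, of "exp (t * m)" t]
  show "integrable lborel (pY t)" using td_facts[OF pY t] by auto
  show "integrable lborel (\<lambda>x. \<Sum>n. exp (t * (\<integral>x. \<nu>X x - \<nu>Y x \<partial>lborel)) * (-t) ^ n / fact n
                                       * iconv (pX t) (\<lambda>x. \<nu>X x - \<nu>Y x) n x)"
    using sf(2) by (simp add: m_def \<sigma>_def)
  fix \<xi> :: 'a
  define sh where "sh = (\<integral>x. \<sigma> x * cos (\<xi> \<bullet> x) \<partial>lborel)"
  have psi: "levy_exponent \<nu>Y \<xi> = levy_exponent \<nu>X \<xi> - m + sh"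
    using levy_exponent_diff[OF levX levY sigma_int, of \<xi>] by (simp add: m_def sh_def \<sigma>_def)
  have "(\<integral>x. (\<Sum>n. exp (t * (\<integral>x. \<nu>X x - \<nu>Y x \<partial>lborel)) * (-t) ^ n / fact n
                                       * iconv (pX t) (\<lambda>x. \<nu>X x - \<nu>Y x) n x) *\<^sub>R cis (\<xi> \<bullet> x) \<partial>lborel)
      = complex_of_real (exp (t * m)) * (\<integral>x. pX t x *\<^sub>R cis (\<xi> \<bullet> x) \<partial>lborel)
           * exp (- complex_of_real t * (\<integral>x. \<sigma> x *\<^sub>R cis (\<xi> \<bullet> x) \<partial>lborel))"
    using sf(3)[of \<xi>] by (simp add: m_def \<sigma>_def)
  also have "\<dots> = complex_of_real (exp (t * m) * exp (- t * levy_exponent \<nu>X \<xi>) * exp (- t * sh))"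
    unfolding td_facts(4)[OF pX t] sigma_hat_real[OF s sym] sh_def[symmetric]
    by (simp flip: exp_of_real)
  also have "\<dots> = complex_of_real (exp (- t * levy_exponent \<nu>Y \<xi>))"
    unfolding psi by (simp add: exp_add[symmetric] algebra_simps)
  also have "\<dots> = (\<integral>x. pY t x *\<^sub>R cis (\<xi> \<bullet> x) \<partial>lborel)"
    using td_facts(4)[OF pY t] by simp
  finally show "(\<integral>x. pY t x *\<^sub>R cis (\<xi> \<bullet> x) \<partial>lborel) = (\<integral>x. (\<Sum>n. exp (t * (\<integral>x. \<nu>X x - \<nu>Y x \<partial>lborel)) * (-t) ^ n / fact n
                                       * iconv (pX t) (\<lambda>x. \<nu>X x - \<nu>Y x) n x) *\<^sub>R cis (\<xi> \<bullet> x) \<partial>lborel)" ..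
qed

theorem mainTheorem7:
  fixes \<nu>X \<nu>Y :: "'a::euclidean_space \<Rightarrow> real"
    and pX pY :: "real \<Rightarrow> 'a \<Rightarrow> real"
    and \<delta> \<zeta> c1 c2 c3 :: real
  assumes levX: "symmetric_levy_density \<nu>X"
    and levY: "symmetric_levy_density \<nu>Y"
    and pX: "transition_density \<nu>X pX"
    and pY: "transition_density \<nu>Y pY"
    and sigma_int: "integrable lborel (\<lambda>x. \<nu>X x - \<nu>Y x)"
    and delta: "\<delta> > 0" and zeta: "\<zeta> > 0"
    and i: "\<And>t x. 0 < t \<Longrightarrow> t \<le> 1 \<Longrightarrow> norm x \<ge> \<delta> \<Longrightarrow>
              \<bar>conv (pX t) (\<lambda>y. \<nu>X y - \<nu>Y y) x\<bar> + \<bar>\<nu>X x - \<nu>Y x\<bar> \<le> c1"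
    and ii: "\<And>t x. 0 < t \<Longrightarrow> t \<le> 1 \<Longrightarrow> pX t x \<le> c2 * t powr (- \<zeta>)"
    and iii: "\<And>t x. 0 < t \<Longrightarrow> t \<le> 1 \<Longrightarrow> norm x \<ge> \<delta> \<Longrightarrow> pX t x \<le> c3"
  shows "\<exists>C. \<forall>t>0. AE x in lborel.
           norm x \<ge> max (real_of_int \<lfloor>\<zeta>\<rfloor>) 1 * \<delta> \<longrightarrow> pY t x \<le> C"
proof -
  define \<sigma> where "\<sigma> = (\<lambda>x. \<nu>X x - \<nu>Y x)"
  define m where "m = (\<integral>x. \<nu>X x - \<nu>Y x \<partial>lborel)"
  define s where "s = (\<integral>x. \<bar>\<sigma> x\<bar> \<partial>lborel)"
  define K0 where "K0 = c1 + \<bar>c2\<bar> + \<bar>c3\<bar>"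
  define Cs where "Cs = (\<Sum>n. exp \<bar>m\<bar> * K0 * (2 * (s + 1)) ^ n / fact n)"
  define G where "G = (\<Sum>n. exp \<bar>m\<bar> * \<bar>c2\<bar> * s ^ n / fact n)"
  define R where "R = max (real_of_int \<lfloor>\<zeta>\<rfloor>) 1 * \<delta>"
  have s0: "0 \<le> s" unfolding s_def by simp
  have si: "integrable lborel \<sigma>" using sigma_int by (simp add: \<sigma>_def)
  have \<sigma>b: "\<bar>\<sigma> y\<bar> \<le> c1" if "norm y \<ge> \<delta>" for y
    using i[of 1 y] that unfolding \<sigma>_def by simp
  obtain b :: 'a where b: "b \<in> Basis" using nonempty_Basis by blast
  have c10: "0 \<le> c1" using \<sigma>b[of "\<delta> *\<^sub>R b"] b delta by auto
  have K00: "0 \<le> K0" unfolding K0_def using c10 by simp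
  have R\<delta>: "\<delta> \<le> R" unfolding R_def using delta by simp
  define g where "g = (\<lambda>t x. \<Sum>n. exp (t * m) * (-t) ^ n / fact n * iconv (pX t) \<sigma> n x)"
  have pXB: "\<bar>pX t x\<bar> \<le> c2 * t powr (- \<zeta>)" if "0 < t" "t \<le> 1" for t x
    using ii[OF that, of x] td_facts(2)[OF pX \<open>0 < t\<close>, of x] by simp
  have pXi: "integrable lborel (pX t)" if "0 < t" for t using td_facts(3)[OF pX that] .
  have pX1: "(\<integral>x. \<bar>pX t x\<bar> \<partial>lborel) \<le> 1" if "0 < t" for t
    using td_facts(2,5)[OF pX that] by simp
  have gae: "AE x in lborel. pY t x = g t x" if "0 < t" "t \<le> 1" for t
    using series_ae_eq[OF levX levY pX pY sigma_int \<open>0 < t\<close> pXB[OF that]]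
    by (simp add: g_def m_def \<sigma>_def)
  have small: "\<bar>g t x\<bar> \<le> Cs" if t: "0 < t" "t \<le> 1" and x: "norm x \<ge> R" for t x
  proof -
    let ?f = "\<lambda>n. exp (t * m) * (-t) ^ n / fact n * iconv (pX t) \<sigma> n x"
    have sm: "summable (\<lambda>n. \<bar>?f n\<bar>)" by (rule series_summable[OF pXi[OF t(1)] si pXB[OF t]])
    have trm: "\<bar>?f n\<bar> \<le> exp \<bar>m\<bar> * K0 * (2 * (s + 1)) ^ n / fact n" for n
    proof -
      have tn: "t ^ n \<le> 1" using t by (simp add: power_le_one)
      have key: "t ^ n * \<bar>iconv (pX t) \<sigma> n x\<bar> \<le> K0 * (2 * (s + 1)) ^ n"
      proof (cases "real n \<le> \<zeta>")
        case True
        show ?thesis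
        proof (cases "n = 0")
          case True
          have "pX t x \<le> c3" using iii[OF t, of x] x R\<delta> by simp
          then show ?thesis using True td_facts(2)[OF pX \<open>0 < t\<close>, of x] c10 by (simp add: K0_def)
        next
          case False
          then have n1: "1 \<le> n" by simp
          have "int n \<le> \<lfloor>\<zeta>\<rfloor>" using True by (simp add: le_floor_iff)
          then have "real_of_int (int n) \<le> real_of_int \<lfloor>\<zeta>\<rfloor>" by (simp only: of_int_le_iff)
          then have "real n * \<delta> \<le> R" unfolding R_def using delta by (intro mult_right_mono) auto
          then have xn: "real n * \<delta> \<le> norm x" using x by linarith
          have h1': "\<bar>conv (pX t) \<sigma> z\<bar> \<le> c1" if "norm z \<ge> \<delta>" for z
          proof -
            have "\<bar>conv (pX t) \<sigma> z\<bar> + \<bar>\<nu>X z - \<nu>Y z\<bar> \<le> c1" using i[OF t that] by (simp add: \<sigma>_def)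
            then show ?thesis by (smt (verit) abs_ge_zero)
          qed
          have "\<bar>iconv (pX t) \<sigma> n x\<bar> \<le> real n * c1 * s ^ (n - 1)"
            unfolding s_def
            by (rule region_bound[OF pXi[OF \<open>0 < t\<close>] si pXB[OF t] pX1[OF \<open>0 < t\<close>] c10 h1' \<sigma>b n1 xn])
          also have "\<dots> \<le> 2 ^ n * c1 * (s + 1) ^ n"
          proof -
            have "n < 2 ^ n" by (rule less_exp)
            then have "real n \<le> 2 ^ n" by (metis less_imp_le of_nat_le_iff of_nat_numeral of_nat_power)
            moreover have "s ^ (n - 1) \<le> (s + 1) ^ n"
            proof -
              have "s ^ (n - 1) \<le> (s + 1) ^ (n - 1)" using s0 by (intro power_mono) auto
              also have "\<dots> \<le> (s + 1) ^ n" using s0 by (intro power_increasing) auto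
              finally show ?thesis .
            qed
            ultimately have a: "real n * c1 \<le> 2 ^ n * c1" and b: "s ^ (n - 1) \<le> (s + 1) ^ n"
              using c10 by (auto intro: mult_right_mono)
            show ?thesis using mult_mono[OF a b] c10 s0 by simp

          qed
          also have "\<dots> = c1 * (2 * (s + 1)) ^ n" by (simp only: power_mult_distrib mult_ac)
          also have "\<dots> \<le> K0 * (2 * (s + 1)) ^ n"
            using s0 by (intro mult_right_mono) (auto simp: K0_def)
          finally have "\<bar>iconv (pX t) \<sigma> n x\<bar> \<le> K0 * (2 * (s + 1)) ^ n" .
          moreover have "t ^ n * \<bar>iconv (pX t) \<sigma> n x\<bar> \<le> \<bar>iconv (pX t) \<sigma> n x\<bar>"
            using tn t by (simp add: mult_left_le_one_le)
          ultimately show ?thesis by linarith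
        qed
      next
        case False
        have "\<bar>iconv (pX t) \<sigma> n x\<bar> \<le> c2 * t powr (- \<zeta>) * s ^ n"
          unfolding s_def by (rule iconv_bound[OF pXi[OF \<open>0 < t\<close>] si pXB[OF t]])
        then have "t ^ n * \<bar>iconv (pX t) \<sigma> n x\<bar> \<le> t ^ n * (c2 * t powr (- \<zeta>) * s ^ n)"
          using t by (intro mult_left_mono) auto
        also have "\<dots> = c2 * (t powr (real n - \<zeta>)) * s ^ n"
          using t by (simp add: powr_add[symmetric] powr_realpow[symmetric] powr_diff powr_minus divide_inverse)
        also have "\<dots> \<le> \<bar>c2\<bar> * 1 * s ^ n"
        proof (intro mult_right_mono mult_mono)
          show "t powr (real n - \<zeta>) \<le> 1" using t False by (intro powr_le1) auto
        qed (use s0 t in auto)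
        also have "\<dots> \<le> K0 * (2 * (s + 1)) ^ n"
        proof -
          have "s ^ n \<le> (2 * (s + 1)) ^ n" using s0 by (intro power_mono) auto
          moreover have "\<bar>c2\<bar> \<le> K0" unfolding K0_def using c10 by simp
          ultimately show ?thesis using s0 K00 by (simp add: mult_mono)
        qed
        finally show ?thesis .
      qed
      have "\<bar>?f n\<bar> = exp (t * m) * (t ^ n * \<bar>iconv (pX t) \<sigma> n x\<bar>) / fact n"
        using t by (simp add: abs_mult power_abs)
      also have "\<dots> \<le> exp \<bar>m\<bar> * (K0 * (2 * (s + 1)) ^ n) / fact n"
      proof (rule divide_right_mono)
        have "t * m \<le> \<bar>m\<bar>" using t
          by (metis abs_ge_self abs_mult abs_of_pos mult_left_le_one_le abs_ge_zero order_trans)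
        then have e: "exp (t * m) \<le> exp \<bar>m\<bar>" by simp
        show "exp (t * m) * (t ^ n * \<bar>iconv (pX t) \<sigma> n x\<bar>) \<le> exp \<bar>m\<bar> * (K0 * (2 * (s + 1)) ^ n)"
          by (rule mult_mono[OF e key]) (use t in auto)
      qed simp
      finally show ?thesis by (simp add: mult.assoc)
    qed
    have "\<bar>g t x\<bar> \<le> (\<Sum>n. \<bar>?f n\<bar>)" unfolding g_def by (rule summable_rabs[OF sm])
    also have "\<dots> \<le> Cs" unfolding Cs_def
      by (rule suminf_le[OF trm sm summable_exp_real])
    finally show ?thesis .
  qed
  have pXB1: "\<bar>pX 1 x\<bar> \<le> c2" for x using pXB[of 1 x] by simp
  have glob: "\<bar>g 1 x\<bar> \<le> G" for x
  proof -
    let ?f = "\<lambda>n. exp (1 * m) * (-1) ^ n / fact n * iconv (pX 1) \<sigma> n x"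
    have sm: "summable (\<lambda>n. \<bar>?f n\<bar>)" by (rule series_summable[OF pXi[of 1] si pXB1]) simp
    have trm: "\<bar>?f n\<bar> \<le> exp \<bar>m\<bar> * \<bar>c2\<bar> * s ^ n / fact n" for n
    proof -
      have "\<bar>iconv (pX 1) \<sigma> n x\<bar> \<le> c2 * s ^ n"
        unfolding s_def by (rule iconv_bound[OF pXi si pXB1]) simp
      also have "\<dots> \<le> \<bar>c2\<bar> * s ^ n" using s0 by (intro mult_right_mono) auto
      finally have a: "\<bar>iconv (pX 1) \<sigma> n x\<bar> \<le> \<bar>c2\<bar> * s ^ n" .
      have "\<bar>?f n\<bar> = exp m * \<bar>iconv (pX 1) \<sigma> n x\<bar> / fact n" by (simp add: abs_mult power_abs)
      also have "\<dots> \<le> exp \<bar>m\<bar> * (\<bar>c2\<bar> * s ^ n) / fact n"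
        using a by (intro divide_right_mono mult_mono) auto
      finally show ?thesis by (simp add: mult.assoc)
    qed
    have "\<bar>g 1 x\<bar> \<le> (\<Sum>n. \<bar>?f n\<bar>)" unfolding g_def by (rule summable_rabs[OF sm])
    also have "\<dots> \<le> G" unfolding G_def
      by (rule suminf_le[OF trm sm summable_exp_real])
    finally show ?thesis .
  qed
  have G0: "0 \<le> G" using glob[of 0] by linarith
  have pY1G: "AE y in lborel. pY 1 y \<le> G"
  proof -
    have "AE y in lborel. pY 1 y = g 1 y" by (rule gae) auto
    then show ?thesis
    proof eventually_elim
      case (elim y)
      have "g 1 y \<le> \<bar>g 1 y\<bar>" by simp
      then show ?case using elim glob[of y] by linarith
    qed
  qed
  have large: "AE x in lborel. pY t x \<le> G" if t: "1 < t" for t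
  proof -
    have t0: "0 < t" "0 < t - 1" using t by auto
    have i1: "integrable lborel (pY (t - 1))" and i2: "integrable lborel (pY 1)"
      using td_facts(3)[OF pY t0(2)] td_facts(3)[OF pY] by auto
    have ae: "AE x in lborel. pY t x = conv (pY (t - 1)) (pY 1) x"
    proof (rule fourier_diff_unique)
      show "integrable lborel (pY t)" using td_facts(3)[OF pY t0(1)] .
      show "integrable lborel (conv (pY (t - 1)) (pY 1))" by (rule conv_integrable[OF i1 i2])
      fix \<xi> :: 'a
      show "(\<integral>x. pY t x *\<^sub>R cis (\<xi> \<bullet> x) \<partial>lborel) = (\<integral>x. conv (pY (t - 1)) (pY 1) x *\<^sub>R cis (\<xi> \<bullet> x) \<partial>lborel)"
        unfolding conv_fourier[OF i1 i2] td_facts(4)[OF pY t0(1)] td_facts(4)[OF pY t0(2)] td_facts(4)[OF pY zero_less_one]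
        by (simp flip: of_real_mult exp_add add: algebra_simps)
    qed
    have cb: "conv (pY (t - 1)) (pY 1) x \<le> G" for x
    proof (cases "integrable lborel (\<lambda>y. pY (t - 1) (x - y) * pY 1 y)")
      case True
      have fl: "integrable lborel (\<lambda>y. pY (t - 1) (x - y))" "(\<integral>y. pY (t - 1) (x - y) \<partial>lborel) = 1"
        using lborel_flip[OF i1, of x] td_facts(5)[OF pY t0(2)] by auto
      have "conv (pY (t - 1)) (pY 1) x \<le> (\<integral>y. pY (t - 1) (x - y) * G \<partial>lborel)"
        unfolding conv_def
      proof (rule integral_mono_AE[OF True])
        show "integrable lborel (\<lambda>y. pY (t - 1) (x - y) * G)" using fl by auto
        show "AE y in lborel. pY (t - 1) (x - y) * pY 1 y \<le> pY (t - 1) (x - y) * G"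
          using pY1G by eventually_elim (use td_facts(2)[OF pY t0(2)] in \<open>auto intro: mult_left_mono\<close>)
      qed
      also have "\<dots> = G" using fl by simp
      finally show ?thesis .
    next
      case False
      then show ?thesis unfolding conv_def using G0 by (simp add: not_integrable_integral_eq)
    qed
    show ?thesis using ae by eventually_elim (simp add: cb)
  qed
  show ?thesis
  proof (intro exI[of _ "max Cs G"] allI impI)
    fix t :: real assume t: "0 < t"
    show "AE x in lborel. norm x \<ge> max (real_of_int \<lfloor>\<zeta>\<rfloor>) 1 * \<delta> \<longrightarrow> pY t x \<le> max Cs G"
    proof (cases "t \<le> 1")
      case True
      show ?thesis using gae[OF t True]
      proof eventually_elim
        case (elim x)
        show ?case
        proof
          assume "norm x \<ge> max (real_of_int \<lfloor>\<zeta>\<rfloor>) 1 * \<delta>"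
          then have "\<bar>g t x\<bar> \<le> Cs" using small[OF t True] by (simp add: R_def)
          then show "pY t x \<le> max Cs G" using elim by auto
        qed
      qed
    next
      case False
      have "AE x in lborel. pY t x \<le> G" using False by (intro large) simp
      then show ?thesis by eventually_elim auto
    qed
  qed
qed

end
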